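(* Let $n,m$ be positive integers with $2(m+1)\le n$ and let $H$ be a graph. Then $$\gamma_{gr}(C_n^m\circ H)=\begin{cases}\left\lfloor \frac{n}{m+1}\right\rfloor (\gamma_{gr} (H)-(m+1))+n & \text{if } \gamma_{gr}(H)\geq m+1,\\ 2\gamma_{gr}(H)+n-(2m+2) & \text{if } \gamma_{gr}(H)\leq m.\end{cases}$$
   Context: $C_n^m$ has vertex set $[n]$, distinct vertices adjacent iff their distance in the cycle $1,2,\dots,n,1$ is at most $m$. The lexicographic product $G\circ H$ has vertex set $V(G)\times V(H)$, with $(g_1,h_1)$ adjacent to $(g_2,h_2)$ iff $g_1g_2\in E(G)$, or $g_1=g_2$ and $h_1h_2\in E(H)$. $\gamma_{gr}$ is the Grundy domination number: the maximum length of a sequence $(v_1,\dots,v_k)$ of distinct vertices whose set is dominating and such that each $N[v_i]\setminus\bigcup_{j<i}N[v_j]$ is non-empty ($N[\cdot]$ the closed neighborhood). *)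

theory Defs
  imports Main
begin

type_synonym 'a graph = "'a set \<times> ('a \<Rightarrow> 'a \<Rightarrow> bool)"

definition verts :: "'a graph \<Rightarrow> 'a set" where "verts G = fst G"
definition adj :: "'a graph \<Rightarrow> 'a \<Rightarrow> 'a \<Rightarrow> bool" where "adj G = snd G"

definition finite_simple_graph :: "'a graph \<Rightarrow> bool" where
  "finite_simple_graph G \<longleftrightarrow> finite (verts G) \<and>
     (\<forall>u v. adj G u v \<longrightarrow> u \<in> verts G \<and> v \<in> verts G) \<and>
     (\<forall>u v. adj G u v \<longrightarrow> adj G v u) \<and> (\<forall>v. \<not> adj G v v)"

definition closed_nbhd :: "'a graph \<Rightarrow> 'a \<Rightarrow> 'a set" where
  "closed_nbhd G v = insert v {u \<in> verts G. adj G v u}"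

definition grundy_dom_seq :: "'a graph \<Rightarrow> 'a list \<Rightarrow> bool" where
  "grundy_dom_seq G xs \<longleftrightarrow> distinct xs \<and> set xs \<subseteq> verts G \<and>
     (\<Union>v\<in>set xs. closed_nbhd G v) = verts G \<and>
     (\<forall>i < length xs. closed_nbhd G (xs ! i) - (\<Union>j<i. closed_nbhd G (xs ! j)) \<noteq> {})"

definition grundy_dom_number :: "'a graph \<Rightarrow> nat" where
  "grundy_dom_number G = Max (length ` {xs. grundy_dom_seq G xs})"

definition cycle_dist :: "nat \<Rightarrow> nat \<Rightarrow> nat \<Rightarrow> nat" where
  "cycle_dist n i j = min ((i + n - j) mod n) ((j + n - i) mod n)"

definition cycle_power :: "nat \<Rightarrow> nat \<Rightarrow> nat graph" where
  "cycle_power n m = ({1..n}, \<lambda>i j. i \<in> {1..n} \<and> j \<in> {1..n} \<and> i \<noteq> j \<and> cycle_dist n i j \<le> m)"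

definition lex_product :: "'a graph \<Rightarrow> 'b graph \<Rightarrow> ('a \<times> 'b) graph" where
  "lex_product G H = (verts G \<times> verts H,
     \<lambda>(g1, h1) (g2, h2). (g1, h1) \<in> verts G \<times> verts H \<and> (g2, h2) \<in> verts G \<times> verts H \<and>
       (adj G g1 g2 \<or> (g1 = g2 \<and> adj H h1 h2)))"

end

theory Submission
  imports Defs
begin

definition legal :: "'a graph \<Rightarrow> 'a list \<Rightarrow> bool" where
  "legal G xs \<longleftrightarrow> distinct xs \<and> set xs \<subseteq> verts G \<and>
     (\<forall>i < length xs. closed_nbhd G (xs ! i) - (\<Union>j<i. closed_nbhd G (xs ! j)) \<noteq> {})"

lemma grundy_iff: "grundy_dom_seq G xs \<longleftrightarrow> legal G xs \<and> (\<Union>v\<in>set xs. closed_nbhd G v) = verts G"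
  unfolding grundy_dom_seq_def legal_def by blast

lemma legal_Nil[simp]: "legal G []" by (simp add: legal_def)

lemma UN_less_append: "(\<Union>j<length xs. f ((xs @ ys) ! j)) = (\<Union>v\<in>set xs. f v)"
proof -
  have "(\<Union>j<length xs. f ((xs @ ys) ! j)) = (\<Union>j<length xs. f (xs ! j))"
    by (simp add: nth_append)
  also have "\<dots> = (\<Union>v\<in>set xs. f v)"
  proof -
    have "set xs = (\<lambda>j. xs!j) ` {..<length xs}" by (auto simp: set_conv_nth)
    then show ?thesis by (simp add: image_image)
  qed
  finally show ?thesis .
qed

lemma legal_snoc: "legal G (xs @ [v]) \<longleftrightarrow> legal G xs \<and> v \<notin> set xs \<and> v \<in> verts G \<and>
    \<not> closed_nbhd G v \<subseteq> (\<Union>u\<in>set xs. closed_nbhd G u)"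
proof -
  have A: "(\<forall>i < length (xs@[v]). closed_nbhd G ((xs@[v]) ! i) - (\<Union>j<i. closed_nbhd G ((xs@[v]) ! j)) \<noteq> {})
     \<longleftrightarrow> (\<forall>i < length xs. closed_nbhd G (xs ! i) - (\<Union>j<i. closed_nbhd G (xs ! j)) \<noteq> {})
        \<and> closed_nbhd G v - (\<Union>u\<in>set xs. closed_nbhd G u) \<noteq> {}"
  proof -
    have e1: "\<And>i. i < length xs \<Longrightarrow> (\<Union>j<i. closed_nbhd G ((xs@[v]) ! j)) = (\<Union>j<i. closed_nbhd G (xs ! j))"
      by (simp add: nth_append)
    have e2: "(\<Union>j<length xs. closed_nbhd G ((xs@[v]) ! j)) = (\<Union>u\<in>set xs. closed_nbhd G u)"
      by (rule UN_less_append)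
    show ?thesis
    proof
      assume H: "\<forall>i < length (xs@[v]). closed_nbhd G ((xs@[v]) ! i) - (\<Union>j<i. closed_nbhd G ((xs@[v]) ! j)) \<noteq> {}"
      have "\<forall>i < length xs. closed_nbhd G (xs ! i) - (\<Union>j<i. closed_nbhd G (xs ! j)) \<noteq> {}"
      proof (intro allI impI)
        fix i assume i: "i < length xs"
        have "closed_nbhd G ((xs@[v]) ! i) - (\<Union>j<i. closed_nbhd G ((xs@[v]) ! j)) \<noteq> {}"
          using H i by simp
        then show "closed_nbhd G (xs ! i) - (\<Union>j<i. closed_nbhd G (xs ! j)) \<noteq> {}"
          using e1[OF i] i by (simp add: nth_append)
      qed
      moreover have "closed_nbhd G v - (\<Union>u\<in>set xs. closed_nbhd G u) \<noteq> {}"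
        using H[rule_format, of "length xs"] e2 by simp
      ultimately show "(\<forall>i < length xs. closed_nbhd G (xs ! i) - (\<Union>j<i. closed_nbhd G (xs ! j)) \<noteq> {})
        \<and> closed_nbhd G v - (\<Union>u\<in>set xs. closed_nbhd G u) \<noteq> {}" by blast
    next
      assume H: "(\<forall>i < length xs. closed_nbhd G (xs ! i) - (\<Union>j<i. closed_nbhd G (xs ! j)) \<noteq> {})
        \<and> closed_nbhd G v - (\<Union>u\<in>set xs. closed_nbhd G u) \<noteq> {}"
      show "\<forall>i < length (xs@[v]). closed_nbhd G ((xs@[v]) ! i) - (\<Union>j<i. closed_nbhd G ((xs@[v]) ! j)) \<noteq> {}"
      proof (intro allI impI)
        fix i assume i: "i < length (xs@[v])"
        show "closed_nbhd G ((xs@[v]) ! i) - (\<Union>j<i. closed_nbhd G ((xs@[v]) ! j)) \<noteq> {}"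
        proof (cases "i < length xs")
          case True then show ?thesis using H e1[OF True] by (simp add: nth_append)
        next
          case False then have "i = length xs" using i by simp
          then show ?thesis using H e2 by simp
        qed
      qed
    qed
  qed
  have B: "distinct (xs @ [v]) \<longleftrightarrow> distinct xs \<and> v \<notin> set xs" by simp
  have C: "set (xs @ [v]) \<subseteq> verts G \<longleftrightarrow> set xs \<subseteq> verts G \<and> v \<in> verts G" by auto
  have E: "closed_nbhd G v - (\<Union>u\<in>set xs. closed_nbhd G u) \<noteq> {} \<longleftrightarrow>
     \<not> closed_nbhd G v \<subseteq> (\<Union>u\<in>set xs. closed_nbhd G u)" by blast
  show ?thesis unfolding legal_def A B C E by blast
qed

lemma closed_nbhd_sub: "v \<in> verts G \<Longrightarrow> closed_nbhd G v \<subseteq> verts G"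
  by (auto simp: closed_nbhd_def)

lemma self_in_closed_nbhd: "v \<in> closed_nbhd G v" by (simp add: closed_nbhd_def)

lemma legal_ext_aux:
  assumes f: "finite (verts G)"
  shows "\<forall>xs. legal G xs \<longrightarrow> card (verts G - (\<Union>u\<in>set xs. closed_nbhd G u)) \<le> c
     \<longrightarrow> (\<exists>ys. grundy_dom_seq G (xs @ ys))"
proof (induction c)
  case 0
  show ?case
  proof (intro allI impI)
    fix xs assume l: "legal G xs" and c: "card (verts G - (\<Union>u\<in>set xs. closed_nbhd G u)) \<le> 0"
    have e: "verts G - (\<Union>u\<in>set xs. closed_nbhd G u) = {}" using c f by simp
    have "set xs \<subseteq> verts G" using l unfolding legal_def by blast
    then have "(\<Union>u\<in>set xs. closed_nbhd G u) \<subseteq> verts G" using closed_nbhd_sub[of _ G] by blast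
    then have "(\<Union>u\<in>set (xs @ []). closed_nbhd G u) = verts G" using e by simp
    then have "grundy_dom_seq G (xs @ [])" using l unfolding grundy_iff by simp
    then show "\<exists>ys. grundy_dom_seq G (xs @ ys)" by blast
  qed
next
  case (Suc c)
  show ?case
  proof (intro allI impI)
    fix xs assume l: "legal G xs" and c: "card (verts G - (\<Union>u\<in>set xs. closed_nbhd G u)) \<le> Suc c"
    show "\<exists>ys. grundy_dom_seq G (xs @ ys)"
    proof (cases "verts G - (\<Union>u\<in>set xs. closed_nbhd G u) = {}")
      case True
      then have "card (verts G - (\<Union>u\<in>set xs. closed_nbhd G u)) \<le> c" by (metis card.empty le0)
      then show ?thesis using Suc.IH l by blast
    next
      case False
      then obtain v where v: "v \<in> verts G" "v \<notin> (\<Union>u\<in>set xs. closed_nbhd G u)" by blast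
      have vn: "v \<notin> set xs" using v(2) self_in_closed_nbhd[of v G] by blast
      have nsub: "\<not> closed_nbhd G v \<subseteq> (\<Union>u\<in>set xs. closed_nbhd G u)"
        using v(2) self_in_closed_nbhd[of v G] by blast
      have L: "legal G (xs @ [v])" unfolding legal_snoc using l v(1) vn nsub by blast
      have sub: "verts G - (\<Union>u\<in>set (xs@[v]). closed_nbhd G u) \<subset> verts G - (\<Union>u\<in>set xs. closed_nbhd G u)"
        using v self_in_closed_nbhd[of v G] by auto
      have "card (verts G - (\<Union>u\<in>set (xs@[v]). closed_nbhd G u)) < card (verts G - (\<Union>u\<in>set xs. closed_nbhd G u))"
        using psubset_card_mono[OF _ sub] f by blast
      then have "card (verts G - (\<Union>u\<in>set (xs@[v]). closed_nbhd G u)) \<le> c" using c by linarith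
      then obtain ys where "grundy_dom_seq G ((xs @ [v]) @ ys)" using Suc.IH L by blast
      then have "grundy_dom_seq G (xs @ (v # ys))" by simp
      then show ?thesis by blast
    qed
  qed
qed

lemma legal_ext:
  assumes "finite (verts G)" "legal G xs"
  shows "\<exists>ys. grundy_dom_seq G (xs @ ys)"
  using legal_ext_aux[OF assms(1)] assms(2) by blast

lemma legal_length_le_card: "finite (verts G) \<Longrightarrow> legal G xs \<Longrightarrow> length xs \<le> card (verts G)"
proof -
  assume f: "finite (verts G)" and l: "legal G xs"
  have "length xs = card (set xs)" using l distinct_card[of xs] by (simp add: legal_def)
  also have "\<dots> \<le> card (verts G)" using l f by (intro card_mono) (auto simp: legal_def)
  finally show ?thesis .
qed

lemma gdn_finite: "finite (verts G) \<Longrightarrow> finite (length ` {xs. grundy_dom_seq G xs})"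
proof -
  assume f: "finite (verts G)"
  have "length ` {xs. grundy_dom_seq G xs} \<subseteq> {..card (verts G)}"
  proof
    fix l assume "l \<in> length ` {xs. grundy_dom_seq G xs}"
    then obtain xs where "grundy_dom_seq G xs" "l = length xs" by blast
    then show "l \<in> {..card (verts G)}" using legal_length_le_card[OF f, of xs] grundy_iff[of G xs] by simp
  qed
  then show ?thesis using finite_subset by blast
qed

lemma gdn_ge: "finite (verts G) \<Longrightarrow> grundy_dom_seq G xs \<Longrightarrow> length xs \<le> grundy_dom_number G"
proof -
  assume f: "finite (verts G)" and g: "grundy_dom_seq G xs"
  have fin: "finite (length ` {xs. grundy_dom_seq G xs})" using gdn_finite[OF f] .
  have "length xs \<in> length ` {xs. grundy_dom_seq G xs}" using g by blast
  then show ?thesis unfolding grundy_dom_number_def using Max_ge[OF fin] by blast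
qed

lemma gdn_ex: "finite (verts G) \<Longrightarrow> \<exists>xs. grundy_dom_seq G xs \<and> length xs = grundy_dom_number G"
proof -
  assume f: "finite (verts G)"
  obtain ys where "grundy_dom_seq G ([] @ ys)" using legal_ext[OF f legal_Nil] by blast
  then have ne: "length ` {xs. grundy_dom_seq G xs} \<noteq> {}" by blast
  have "grundy_dom_number G \<in> length ` {xs. grundy_dom_seq G xs}"
    unfolding grundy_dom_number_def using Max_in[OF gdn_finite[OF f] ne] .
  then obtain xs where "xs \<in> {xs. grundy_dom_seq G xs}" "grundy_dom_number G = length xs" by (rule imageE)
  then show ?thesis by (intro exI[of _ xs]) simp
qed

lemma legal_le_gdn: "finite (verts G) \<Longrightarrow> legal G xs \<Longrightarrow> length xs \<le> grundy_dom_number G"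
proof -
  assume f: "finite (verts G)" and l: "legal G xs"
  obtain ys where "grundy_dom_seq G (xs @ ys)" using legal_ext[OF f l] by blast
  from gdn_ge[OF f this] show ?thesis by simp
qed

lemma legal_lt_gdn:
  assumes "finite (verts G)" "legal G xs" "v \<in> verts G" "v \<notin> (\<Union>u\<in>set xs. closed_nbhd G u)"
  shows "length xs + 1 \<le> grundy_dom_number G"
proof -
  have ns: "\<not> closed_nbhd G v \<subseteq> (\<Union>u\<in>set xs. closed_nbhd G u)"
    using assms(4) self_in_closed_nbhd[of v G] by blast
  have vn: "v \<notin> set xs" using assms(4) self_in_closed_nbhd[of v G] by blast
  have "legal G (xs @ [v])" unfolding legal_snoc using assms(2,3) vn ns by blast
  from legal_le_gdn[OF assms(1) this] show ?thesis by simp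
qed


definition fw :: "nat \<Rightarrow> nat \<Rightarrow> nat \<Rightarrow> nat" where "fw n a b = (b + n - a) mod n"

lemma fw_eq: "a \<in> {1..n} \<Longrightarrow> b \<in> {1..n} \<Longrightarrow> fw n a b = (if a \<le> b then b - a else b + n - a)"
proof -
  assume a: "a \<in> {1..n}" and b: "b \<in> {1..n}"
  show ?thesis
  proof (cases "a \<le> b")
    case True
    then have "b + n - a = (b - a) + n" using a by auto
    then have "fw n a b = (b - a) mod n" unfolding fw_def by simp
    also have "\<dots> = b - a" using a b by (intro mod_less) auto
    finally show ?thesis using True by simp
  next
    case False
    then have "fw n a b = b + n - a" unfolding fw_def using a b by (intro mod_less) auto
    then show ?thesis using False by simp
  qed
qed

lemma cd_fw: "cycle_dist n i j = min (fw n j i) (fw n i j)"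
  by (simp add: cycle_dist_def fw_def)

lemma AR:
  assumes "a \<in> {1..n}" "b \<in> {1..n}" "c \<in> {1..n}" "fw n a b \<le> m" "fw n a c \<le> m"
  shows "cycle_dist n b c \<le> m"
proof -
  have e1: "fw n a b = (if a \<le> b then b - a else b + n - a)" using assms fw_eq by blast
  have e2: "fw n a c = (if a \<le> c then c - a else c + n - a)" using assms fw_eq by blast
  have e3: "fw n b c = (if b \<le> c then c - b else c + n - b)" using assms fw_eq by blast
  have e4: "fw n c b = (if c \<le> b then b - c else b + n - c)" using assms fw_eq by blast
  show ?thesis using assms unfolding cd_fw e1 e2 e3 e4 min_def
    by (auto split: if_splits)
qed

definition NCc :: "nat \<Rightarrow> nat \<Rightarrow> nat \<Rightarrow> nat set" where
  "NCc n m g = {x \<in> {1..n}. cycle_dist n g x \<le> m}"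
definition NCo :: "nat \<Rightarrow> nat \<Rightarrow> nat \<Rightarrow> nat set" where
  "NCo n m g = {x \<in> {1..n}. x \<noteq> g \<and> cycle_dist n g x \<le> m}"
definition arc :: "nat \<Rightarrow> nat \<Rightarrow> nat \<Rightarrow> nat set" where
  "arc n m x = {y \<in> {1..n}. fw n x y \<le> m}"
definition KK :: "nat \<Rightarrow> nat \<Rightarrow> nat set \<Rightarrow> nat set" where
  "KK n m S = {x \<in> {1..n}. arc n m x \<subseteq> S}"

lemma card_fw_to:
  assumes "m < n" "g \<in> {1..n}"
  shows "card {x \<in> {1..n}. fw n x g \<le> m} = m + 1"
proof -
  have "bij_betw (\<lambda>x. fw n x g) {x \<in> {1..n}. fw n x g \<le> m} {..m}"
  proof (rule bij_betw_imageI)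
    show "inj_on (\<lambda>x. fw n x g) {x \<in> {1..n}. fw n x g \<le> m}"
    proof (rule inj_onI)
      fix x y assume x: "x \<in> {x \<in> {1..n}. fw n x g \<le> m}" and y: "y \<in> {x \<in> {1..n}. fw n x g \<le> m}"
        and e: "fw n x g = fw n y g"
      have e1: "fw n x g = (if x \<le> g then g - x else g + n - x)" using fw_eq x assms(2) by blast
      have e2: "fw n y g = (if y \<le> g then g - y else g + n - y)" using fw_eq y assms(2) by blast
      from x y e assms show "x = y" unfolding e1 e2 by (auto split: if_splits)
    qed
    show "(\<lambda>x. fw n x g) ` {x \<in> {1..n}. fw n x g \<le> m} = {..m}"
    proof
      show "(\<lambda>x. fw n x g) ` {x \<in> {1..n}. fw n x g \<le> m} \<subseteq> {..m}" by auto
      show "{..m} \<subseteq> (\<lambda>x. fw n x g) ` {x \<in> {1..n}. fw n x g \<le> m}"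
      proof
        fix d assume d: "d \<in> {..m}"
        define x where "x = (if d < g then g - d else g + n - d)"
        have x1: "x \<in> {1..n}" using d assms unfolding x_def by auto
        have x2: "fw n x g = d"
        proof -
          have "fw n x g = (if x \<le> g then g - x else g + n - x)" using fw_eq x1 assms(2) by blast
          then show ?thesis using d assms unfolding x_def by (auto split: if_splits)
        qed
        show "d \<in> (\<lambda>x. fw n x g) ` {x \<in> {1..n}. fw n x g \<le> m}"
          using x1 x2 d by (intro image_eqI[of _ _ x]) auto
      qed
    qed
  qed
  then show ?thesis by (simp add: bij_betw_same_card)
qed

lemma card_fw_from:
  assumes "m < n" "g \<in> {1..n}"
  shows "card {x \<in> {1..n}. fw n g x \<le> m} = m + 1"
proof -
  have "bij_betw (\<lambda>x. fw n g x) {x \<in> {1..n}. fw n g x \<le> m} {..m}"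
  proof (rule bij_betw_imageI)
    show "inj_on (\<lambda>x. fw n g x) {x \<in> {1..n}. fw n g x \<le> m}"
    proof (rule inj_onI)
      fix x y assume x: "x \<in> {x \<in> {1..n}. fw n g x \<le> m}" and y: "y \<in> {x \<in> {1..n}. fw n g x \<le> m}"
        and e: "fw n g x = fw n g y"
      have e1: "fw n g x = (if g \<le> x then x - g else x + n - g)" using fw_eq x assms(2) by blast
      have e2: "fw n g y = (if g \<le> y then y - g else y + n - g)" using fw_eq y assms(2) by blast
      from x y e assms show "x = y" unfolding e1 e2 by (auto split: if_splits)
    qed
    show "(\<lambda>x. fw n g x) ` {x \<in> {1..n}. fw n g x \<le> m} = {..m}"
    proof
      show "(\<lambda>x. fw n g x) ` {x \<in> {1..n}. fw n g x \<le> m} \<subseteq> {..m}" by auto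
      show "{..m} \<subseteq> (\<lambda>x. fw n g x) ` {x \<in> {1..n}. fw n g x \<le> m}"
      proof
        fix d assume d: "d \<in> {..m}"
        define x where "x = (if g + d \<le> n then g + d else g + d - n)"
        have x1: "x \<in> {1..n}" using d assms unfolding x_def by auto
        have x2: "fw n g x = d"
        proof -
          have "fw n g x = (if g \<le> x then x - g else x + n - g)" using fw_eq x1 assms(2) by blast
          then show ?thesis using d assms unfolding x_def by (auto split: if_splits)
        qed
        show "d \<in> (\<lambda>x. fw n g x) ` {x \<in> {1..n}. fw n g x \<le> m}"
          using x1 x2 d by (intro image_eqI[of _ _ x]) auto
      qed
    qed
  qed
  then show ?thesis by (simp add: bij_betw_same_card)
qed

lemma card_NCc:
  assumes "2 * m < n" "g \<in> {1..n}"
  shows "card (NCc n m g) = 2 * m + 1"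
proof -
  let ?A = "{x \<in> {1..n}. fw n g x \<le> m}" and ?B = "{x \<in> {1..n}. fw n x g \<le> m}"
  have e: "NCc n m g = ?A \<union> ?B" unfolding NCc_def cd_fw by auto
  have i: "?A \<inter> ?B = {g}"
  proof
    show "?A \<inter> ?B \<subseteq> {g}"
    proof
      fix x assume "x \<in> ?A \<inter> ?B"
      then have x: "x \<in> {1..n}" "fw n g x \<le> m" "fw n x g \<le> m" by auto
      have e1: "fw n g x = (if g \<le> x then x - g else x + n - g)" using fw_eq x assms(2) by blast
      have e2: "fw n x g = (if x \<le> g then g - x else g + n - x)" using fw_eq x assms(2) by blast
      show "x \<in> {g}" using x(2,3) assms unfolding e1 e2 by (auto split: if_splits)
    qed
    show "{g} \<subseteq> ?A \<inter> ?B" using assms by (simp add: fw_eq)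
  qed
  have "card (?A \<union> ?B) + card (?A \<inter> ?B) = card ?A + card ?B"
    using card_Un_Int[of ?A ?B] by simp
  then show ?thesis using e i card_fw_to[of m n g] card_fw_from[of m n g] assms by simp
qed

lemma KK_sub: "KK n m S \<subseteq> {1..n}" unfolding KK_def by blast

lemma KK_card_le: "card (KK n m S) \<le> n"
  using card_mono[OF _ KK_sub, of n m S] by simp

lemma KK_mono: "S \<subseteq> S' \<Longrightarrow> card (KK n m S) \<le> card (KK n m S')"
  by (rule card_mono) (auto simp: KK_def)

lemma KK_I:
  assumes "m < n" "g \<in> {1..n}" "g \<notin> S"
  shows "card (KK n m (S \<union> NCc n m g)) \<ge> card (KK n m S) + (m + 1)"
proof -
  let ?St = "{x \<in> {1..n}. fw n x g \<le> m}"
  have d: "?St \<inter> KK n m S = {}"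
  proof -
    { fix x assume x: "x \<in> ?St" "x \<in> KK n m S"
      then have "g \<in> arc n m x" using assms unfolding arc_def by auto
      then have False using x assms unfolding KK_def by auto }
    then show ?thesis by blast
  qed
  have s: "?St \<union> KK n m S \<subseteq> KK n m (S \<union> NCc n m g)"
  proof
    fix x assume x: "x \<in> ?St \<union> KK n m S"
    show "x \<in> KK n m (S \<union> NCc n m g)"
    proof (cases "x \<in> KK n m S")
      case True then show ?thesis unfolding KK_def by auto
    next
      case False
      then have x1: "x \<in> {1..n}" "fw n x g \<le> m" using x by auto
      have "arc n m x \<subseteq> NCc n m g"
      proof
        fix y assume "y \<in> arc n m x"
        then have "y \<in> {1..n}" "fw n x y \<le> m" unfolding arc_def by auto
        then show "y \<in> NCc n m g" using AR[of x n g y m] x1 assms unfolding NCc_def by auto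
      qed
      then show ?thesis using x1 unfolding KK_def by auto
    qed
  qed
  have "card (?St \<union> KK n m S) = card ?St + card (KK n m S)"
    by (rule card_Un_disjoint[OF _ _ d]) (auto simp: KK_def)
  also have "card ?St = m + 1" using card_fw_to assms by simp
  finally have "card (?St \<union> KK n m S) = m + 1 + card (KK n m S)" .
  moreover have "card (?St \<union> KK n m S) \<le> card (KK n m (S \<union> NCc n m g))"
    by (rule card_mono[OF _ s]) (auto simp: KK_def)
  ultimately show ?thesis by simp
qed

lemma KK_N:
  assumes "m < n" "y \<in> {1..n}" "w \<in> NCc n m y" "w \<notin> S"
  shows "card (KK n m (S \<union> NCc n m y)) \<ge> card (KK n m S) + 1"
proof -
  have w1: "w \<in> {1..n}" "cycle_dist n y w \<le> m" using assms unfolding NCc_def by auto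
  obtain x where x: "x \<in> {1..n}" "w \<in> arc n m x" "arc n m x \<subseteq> NCc n m y"
  proof (cases "fw n y w \<le> m")
    case True
    have "arc n m y \<subseteq> NCc n m y" unfolding arc_def NCc_def cd_fw by auto
    then show ?thesis using that[of y] True w1 assms unfolding arc_def by auto
  next
    case False
    then have fwy: "fw n w y \<le> m" using w1 unfolding cd_fw by simp
    have "arc n m w \<subseteq> NCc n m y"
    proof
      fix z assume "z \<in> arc n m w"
      then have "z \<in> {1..n}" "fw n w z \<le> m" unfolding arc_def by auto
      then show "z \<in> NCc n m y" using AR[of w n y z m] w1 fwy assms unfolding NCc_def by auto
    qed
    moreover have "w \<in> arc n m w" using w1 unfolding arc_def fw_def by simp
    ultimately show ?thesis using that[of w] w1 by auto
  qed
  have "x \<notin> KK n m S" using x assms unfolding KK_def by auto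
  moreover have "x \<in> KK n m (S \<union> NCc n m y)" using x unfolding KK_def by auto
  ultimately have "insert x (KK n m S) \<subseteq> KK n m (S \<union> NCc n m y)"
    unfolding KK_def by auto
  then have "card (insert x (KK n m S)) \<le> card (KK n m (S \<union> NCc n m y))"
    by (rule card_mono[rotated]) (auto simp: KK_def)
  then show ?thesis using \<open>x \<notin> KK n m S\<close> by (simp add: KK_def)
qed


lemma verts_lex: "verts (lex_product G H) = verts G \<times> verts H"
  by (simp add: lex_product_def verts_def)

lemma adj_lex: "adj (lex_product G H) (a, b) (c, d) \<longleftrightarrow>
   (a, b) \<in> verts G \<times> verts H \<and> (c, d) \<in> verts G \<times> verts H \<and> (adj G a c \<or> (a = c \<and> adj H b d))"
  by (simp add: lex_product_def adj_def verts_def)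

lemma verts_cp: "verts (cycle_power n m) = {1..n}"
  by (simp add: cycle_power_def verts_def)

lemma adj_cp: "adj (cycle_power n m) i j \<longleftrightarrow> i \<in> {1..n} \<and> j \<in> {1..n} \<and> i \<noteq> j \<and> cycle_dist n i j \<le> m"
  by (simp add: cycle_power_def adj_def)

lemma nbhd_G:
  assumes "g \<in> {1..n}" "h \<in> verts H"
  shows "closed_nbhd (lex_product (cycle_power n m) H) (g, h) = NCo n m g \<times> verts H \<union> {g} \<times> closed_nbhd H h"
proof -
  have ch: "closed_nbhd H h \<subseteq> verts H" using closed_nbhd_sub[of h H] assms(2) .
  show ?thesis
  proof (rule set_eqI)
    fix p :: "nat \<times> 'a"
    obtain x y where p: "p = (x, y)" by (cases p)
    show "p \<in> closed_nbhd (lex_product (cycle_power n m) H) (g, h) \<longleftrightarrow>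
          p \<in> NCo n m g \<times> verts H \<union> {g} \<times> closed_nbhd H h"
      unfolding p closed_nbhd_def[of "lex_product (cycle_power n m) H"] NCo_def
      using assms ch by (auto simp: closed_nbhd_def adj_lex verts_lex verts_cp adj_cp)
  qed
qed

lemma NCc_NCo: "g \<in> {1..n} \<Longrightarrow> NCc n m g = insert g (NCo n m g)"
  unfolding NCc_def NCo_def cycle_dist_def by auto

lemma NCo_sub: "NCo n m g \<subseteq> NCc n m g" unfolding NCc_def NCo_def by auto

lemma NCo_irrefl: "g \<notin> NCo n m g" unfolding NCo_def by auto


locale UB =
  fixes n m :: nat and H :: "'b graph" and xs :: "(nat \<times> 'b) list"
  assumes nm: "2 * (m + 1) \<le> n" and m0: "0 < m" and finH: "finite (verts H)" and neH: "verts H \<noteq> {}"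
    and gs: "grundy_dom_seq (lex_product (cycle_power n m) H) xs"
begin

abbreviation "GG \<equiv> lex_product (cycle_power n m) H"
abbreviation "L \<equiv> length xs"

definition lay where "lay t = fst (xs ! t)"
definition hv where "hv t = snd (xs ! t)"
definition D where "D t = (\<Union>j<t. closed_nbhd GG (xs ! j))"
definition C where "C t = (\<Union>j<t. NCo n m (lay j))"
definition U where "U t = lay ` {..<t}"
definition Ity where "Ity t \<longleftrightarrow> t < L \<and> lay t \<notin> U t \<and> lay t \<notin> C t"
definition Nty where "Nty t \<longleftrightarrow> t < L \<and> lay t \<notin> U t \<and> lay t \<in> C t"
definition IL where "IL = lay ` {t. Ity t}"
definition W where "W t = (SOME w. w \<in> NCo n m (lay t) \<and> (\<exists>h\<in>verts H. (w, h) \<notin> D t))"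

lemma legal_xs: "legal GG xs" using gs grundy_iff by blast

lemma xs_in: "t < L \<Longrightarrow> lay t \<in> {1..n} \<and> hv t \<in> verts H"
proof -
  assume t: "t < L"
  have "xs ! t \<in> verts GG" using legal_xs t nth_mem[OF t] unfolding legal_def by blast
  then show ?thesis unfolding verts_lex verts_cp lay_def hv_def by (cases "xs ! t") auto
qed

lemma xs_eq: "xs ! t = (lay t, hv t)" unfolding lay_def hv_def by simp

lemma Nt: "t < L \<Longrightarrow> closed_nbhd GG (xs ! t) = NCo n m (lay t) \<times> verts H \<union> {lay t} \<times> closed_nbhd H (hv t)"
  using nbhd_G[of "lay t" n "hv t" H m] xs_in xs_eq by simp

lemma fp: "t < L \<Longrightarrow> closed_nbhd GG (xs ! t) - D t \<noteq> {}"
  using legal_xs unfolding legal_def D_def by blast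

lemma CD: "x \<in> C t \<Longrightarrow> t \<le> L \<Longrightarrow> h \<in> verts H \<Longrightarrow> (x, h) \<in> D t"
proof -
  assume x: "x \<in> C t" and t: "t \<le> L" and h: "h \<in> verts H"
  then obtain j where j: "j < t" "x \<in> NCo n m (lay j)" unfolding C_def by blast
  then have "(x, h) \<in> closed_nbhd GG (xs ! j)" using Nt[of j] t h by simp
  then show ?thesis unfolding D_def using j by blast
qed

lemma ND: "s < t \<Longrightarrow> t \<le> L \<Longrightarrow> h \<in> closed_nbhd H (hv s) \<Longrightarrow> (lay s, h) \<in> D t"
proof -
  assume s: "s < t" and t: "t \<le> L" and h: "h \<in> closed_nbhd H (hv s)"
  then have "(lay s, h) \<in> closed_nbhd GG (xs ! s)" using Nt[of s] by simp
  then show ?thesis unfolding D_def using s by blast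
qed

lemma NCo_C: "s < t \<Longrightarrow> NCo n m (lay s) \<subseteq> C t"
  unfolding C_def by blast

lemma C_mono: "s \<le> t \<Longrightarrow> C s \<subseteq> C t" unfolding C_def by (auto intro!: bexI)

lemma cH_sub: "t < L \<Longrightarrow> closed_nbhd H (hv t) \<subseteq> verts H"
  using closed_nbhd_sub[of "hv t" H] xs_in by blast

lemma F1: "t < L \<Longrightarrow> lay t \<in> U t \<Longrightarrow> lay t \<notin> C t"
proof
  assume t: "t < L" and u: "lay t \<in> U t" and c: "lay t \<in> C t"
  obtain s where s: "s < t" "lay s = lay t" using u unfolding U_def by auto
  have sub: "closed_nbhd GG (xs ! t) \<subseteq> D t"
  proof
    fix p assume "p \<in> closed_nbhd GG (xs ! t)"
    then have "p \<in> NCo n m (lay t) \<times> verts H \<union> {lay t} \<times> closed_nbhd H (hv t)" using Nt t by simp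
    then show "p \<in> D t"
    proof
      assume "p \<in> NCo n m (lay t) \<times> verts H"
      then show ?thesis using NCo_C[OF s(1)] s(2) CD t by (cases p) auto
    next
      assume "p \<in> {lay t} \<times> closed_nbhd H (hv t)"
      then show ?thesis using c CD t cH_sub[OF t] by (cases p) auto
    qed
  qed
  then show False using fp[OF t] by blast
qed

lemma W_ex: "Nty t \<Longrightarrow> \<exists>w. w \<in> NCo n m (lay t) \<and> (\<exists>h\<in>verts H. (w, h) \<notin> D t)"
proof -
  assume N: "Nty t"
  then have t: "t < L" and c: "lay t \<in> C t" unfolding Nty_def by auto
  obtain p where p: "p \<in> closed_nbhd GG (xs ! t)" "p \<notin> D t" using fp[OF t] by blast
  obtain x h where xh: "p = (x, h)" by (cases p)
  have "p \<in> NCo n m (lay t) \<times> verts H \<union> {lay t} \<times> closed_nbhd H (hv t)" using Nt t p by simp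
  then show ?thesis
  proof
    assume "p \<in> NCo n m (lay t) \<times> verts H"
    then show ?thesis using p xh by blast
  next
    assume "p \<in> {lay t} \<times> closed_nbhd H (hv t)"
    then have "p \<in> D t" using c CD t cH_sub[OF t] xh by auto
    then show ?thesis using p by blast
  qed
qed

lemma W_prop: "Nty t \<Longrightarrow> W t \<in> NCo n m (lay t) \<and> (\<exists>h\<in>verts H. (W t, h) \<notin> D t)"
  unfolding W_def using someI_ex[OF W_ex] by blast

lemma W_notC: "Nty t \<Longrightarrow> W t \<notin> C t"
proof
  assume N: "Nty t" and c: "W t \<in> C t"
  obtain h where "h \<in> verts H" "(W t, h) \<notin> D t" using W_prop[OF N] by blast
  then show False using CD[OF c] N unfolding Nty_def by auto
qed

lemma W_inj: "Nty s \<Longrightarrow> Nty t \<Longrightarrow> W s = W t \<Longrightarrow> s = t"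
proof (rule ccontr)
  assume s: "Nty s" and t: "Nty t" and e: "W s = W t" and ne: "s \<noteq> t"
  show False
  proof (cases "s < t")
    case True
    then have "W s \<in> C t" using NCo_C W_prop[OF s] by blast
    then show False using W_notC[OF t] e by simp
  next
    case False
    then have "t < s" using ne by simp
    then have "W t \<in> C s" using NCo_C W_prop[OF t] by blast
    then show False using W_notC[OF s] e by simp
  qed
qed

lemma first_occ: "lay t \<in> U t \<Longrightarrow> \<exists>s<t. lay s = lay t \<and> lay s \<notin> U s"
proof -
  assume u: "lay t \<in> U t"
  then obtain s0 where s0: "s0 < t" "lay s0 = lay t" unfolding U_def by auto
  define s where "s = (LEAST s. lay s = lay t)"
  have ls: "lay s = lay t" unfolding s_def by (rule LeastI[of _ s0]) (rule s0(2))
  have "s \<le> s0" unfolding s_def by (rule Least_le) (rule s0(2))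
  then have st: "s < t" using s0 by simp
  have "lay s \<notin> U s"
  proof
    assume "lay s \<in> U s"
    then obtain r where "r < s" "lay r = lay s" unfolding U_def by auto
    then show False using ls not_less_Least[of r "\<lambda>s. lay s = lay t"] unfolding s_def by simp
  qed
  then show ?thesis using st ls by blast
qed

lemma IL_iff: "t < L \<Longrightarrow> lay t \<in> IL \<longleftrightarrow> \<not> Nty t"
proof
  assume t: "t < L" and i: "lay t \<in> IL"
  then obtain s where s: "Ity s" "lay s = lay t" unfolding IL_def by auto
  show "\<not> Nty t"
  proof
    assume N: "Nty t"
    consider "s = t" | "s < t" | "t < s" by linarith
    then show False
    proof cases
      case 1 then show False using s N unfolding Ity_def Nty_def by auto
    next
      case 2 then have "lay t \<in> U t" using s unfolding U_def by (metis image_eqI lessThan_iff)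
      then show False using N unfolding Nty_def by auto
    next
      case 3 then have "lay s \<in> U s" using s unfolding U_def by (metis image_eqI lessThan_iff)
      then show False using s unfolding Ity_def by auto
    qed
  qed
next
  assume t: "t < L" and nN: "\<not> Nty t"
  show "lay t \<in> IL"
  proof (cases "lay t \<in> U t")
    case False
    then have "Ity t" using t nN unfolding Ity_def Nty_def by auto
    then show ?thesis unfolding IL_def by blast
  next
    case True
    obtain s where s: "s < t" "lay s = lay t" "lay s \<notin> U s" using first_occ[OF True] by blast
    have "lay t \<notin> C t" using F1[OF t True] .
    then have "lay s \<notin> C s" using C_mono[of s t] s by auto
    then have "Ity s" using s t unfolding Ity_def by auto
    then show ?thesis using s(2) unfolding IL_def by (metis image_eqI mem_Collect_eq)
  qed
qed

lemma W_U: "Nty t \<Longrightarrow> W t \<in> U t \<Longrightarrow> W t \<in> IL"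
proof -
  assume N: "Nty t" and u: "W t \<in> U t"
  then obtain s0 where s0: "s0 < t" "lay s0 = W t" unfolding U_def by auto
  then have "lay s0 \<in> U t" using u by simp
  have "lay s0 \<in> U (Suc s0)" unfolding U_def by auto
  obtain s where s: "s \<le> s0" "lay s = lay s0" "lay s \<notin> U s"
  proof (cases "lay s0 \<in> U s0")
    case True
    then show ?thesis using first_occ[OF True] that by (meson less_imp_le_nat)
  next
    case False then show ?thesis using that by blast
  qed
  have "lay s \<notin> C s" using W_notC[OF N] C_mono[of s t] s s0 by auto
  then have "Ity s" using s s0 N unfolding Ity_def Nty_def by auto
  then show ?thesis using s s0 unfolding IL_def by (metis image_eqI mem_Collect_eq)
qed

end

context UB begin

definition fl where "fl g t = map snd (filter (\<lambda>v. fst v = g) (take t xs))"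

lemma set_fl: "t \<le> L \<Longrightarrow> set (fl g t) = hv ` {s. s < t \<and> lay s = g}"
proof -
  assume t: "t \<le> L"
  have "set (fl g t) = snd ` {v \<in> set (take t xs). fst v = g}" unfolding fl_def by auto
  also have "{v \<in> set (take t xs). fst v = g} = (\<lambda>s. xs ! s) ` {s. s < t \<and> lay s = g}"
  proof
    show "{v \<in> set (take t xs). fst v = g} \<subseteq> (\<lambda>s. xs ! s) ` {s. s < t \<and> lay s = g}"
    proof
      fix v assume "v \<in> {v \<in> set (take t xs). fst v = g}"
      then obtain i where i: "i < length (take t xs)" "take t xs ! i = v" "fst v = g"
        by (auto simp: in_set_conv_nth)
      then have "i < t" "xs ! i = v" using t by auto
      then show "v \<in> (\<lambda>s. xs ! s) ` {s. s < t \<and> lay s = g}" using i unfolding lay_def by auto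
    qed
    show "(\<lambda>s. xs ! s) ` {s. s < t \<and> lay s = g} \<subseteq> {v \<in> set (take t xs). fst v = g}"
    proof
      fix v assume "v \<in> (\<lambda>s. xs ! s) ` {s. s < t \<and> lay s = g}"
      then obtain s where s: "s < t" "lay s = g" "v = xs ! s" by auto
      then have "v = take t xs ! s" "s < length (take t xs)" using t by auto
      then have "v \<in> set (take t xs)" using nth_mem by metis
      then show "v \<in> {v \<in> set (take t xs). fst v = g}" using s unfolding lay_def by auto
    qed
  qed
  finally show ?thesis by (auto simp: hv_def image_image)
qed

lemma len_fl: "t \<le> L \<Longrightarrow> length (fl g t) = card {s. s < t \<and> lay s = g}"
proof -
  assume t: "t \<le> L"
  have "length (fl g t) = card {i. i < length (take t xs) \<and> fst (take t xs ! i) = g}"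
    unfolding fl_def by (simp add: length_filter_conv_card)
  also have "{i. i < length (take t xs) \<and> fst (take t xs ! i) = g} = {s. s < t \<and> lay s = g}"
    using t unfolding lay_def by auto
  finally show ?thesis .
qed

lemma fl_Suc: "t < L \<Longrightarrow> fl g (Suc t) = (if lay t = g then fl g t @ [hv t] else fl g t)"
  unfolding fl_def using take_Suc_conv_app_nth[of t xs] by (simp add: lay_def hv_def)

lemma legal_fl: "t \<le> L \<Longrightarrow> legal H (fl g t)"
proof (induction t)
  case 0 then show ?case by (simp add: fl_def)
next
  case (Suc t)
  then have t: "t < L" by simp
  have IH: "legal H (fl g t)" using Suc by simp
  show ?case
  proof (cases "lay t = g")
    case False then show ?thesis using IH fl_Suc[OF t] by simp
  next
    case True
    have sfl: "set (fl g t) = hv ` {s. s < t \<and> lay s = g}" using set_fl t by simp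
    have nin: "hv t \<notin> set (fl g t)"
    proof
      assume "hv t \<in> set (fl g t)"
      then obtain s where s: "s < t" "lay s = g" "hv s = hv t" using sfl by auto
      then have "xs ! s = xs ! t" using True xs_eq by metis
      moreover have "distinct xs" using legal_xs unfolding legal_def by blast
      ultimately show False using s t nth_eq_iff_index_eq[of xs s t] by simp
    qed
    have inV: "hv t \<in> verts H" using xs_in t by blast
    have ns: "\<not> closed_nbhd H (hv t) \<subseteq> (\<Union>u\<in>set (fl g t). closed_nbhd H u)"
    proof (cases "lay t \<in> U t")
      case False
      have "{s. s < t \<and> lay s = g} = {}"
      proof (rule ccontr)
        assume "{s. s < t \<and> lay s = g} \<noteq> {}"
        then obtain s where "s < t" "lay s = g" by blast
        then have "lay t \<in> U t" using True unfolding U_def by (metis image_eqI lessThan_iff)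
        then show False using False by simp
      qed
      then have "set (fl g t) = {}" using sfl by simp
      then show ?thesis using self_in_closed_nbhd[of "hv t" H] by auto
    next
      case Ut: True
      have nc: "lay t \<notin> C t" using F1[OF t Ut] .
      obtain s0 where s0: "s0 < t" "lay s0 = lay t" using Ut unfolding U_def by auto
      obtain p where p: "p \<in> closed_nbhd GG (xs ! t)" "p \<notin> D t" using fp[OF t] by blast
      obtain x h where xh: "p = (x, h)" by (cases p)
      have "p \<in> NCo n m (lay t) \<times> verts H \<union> {lay t} \<times> closed_nbhd H (hv t)" using Nt t p by simp
      moreover have "p \<notin> NCo n m (lay t) \<times> verts H"
      proof
        assume "p \<in> NCo n m (lay t) \<times> verts H"
        then have "p \<in> D t" using NCo_C[OF s0(1)] s0(2) CD t xh by auto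
        then show False using p by simp
      qed
      ultimately have xh2: "x = lay t" "h \<in> closed_nbhd H (hv t)" using xh by auto
      have "h \<notin> (\<Union>u\<in>set (fl g t). closed_nbhd H u)"
      proof
        assume "h \<in> (\<Union>u\<in>set (fl g t). closed_nbhd H u)"
        then obtain s where s: "s < t" "lay s = g" "h \<in> closed_nbhd H (hv s)" using sfl by auto
        then have "(lay s, h) \<in> D t" using ND[of s t h] t by simp
        then show False using p xh xh2 s True by simp
      qed
      then show ?thesis using xh2 by blast
    qed
    have "legal H (fl g t @ [hv t])" unfolding legal_snoc using IH nin inV ns by blast
    then show ?thesis using fl_Suc[OF t] True by simp
  qed
qed

abbreviation "kk \<equiv> grundy_dom_number H"
definition cnt where "cnt g = card {s. s < L \<and> lay s = g}"

lemma cnt_le: "cnt g \<le> kk"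
  using legal_le_gdn[OF finH legal_fl[of L g]] len_fl[of L g] unfolding cnt_def by simp

lemma cnt_marked:
  assumes g: "g \<in> IL" and N: "Nty t0" and w: "W t0 = g"
  shows "cnt g + 1 \<le> kk"
proof -
  have t0: "t0 < L" using N unfolding Nty_def by simp
  have before: "\<And>s. s < L \<Longrightarrow> lay s = g \<Longrightarrow> s < t0"
  proof (rule ccontr)
    fix s assume s: "s < L" "lay s = g" "\<not> s < t0"
    have wn: "W t0 \<in> NCo n m (lay t0)" using W_prop[OF N] by blast
    then have "s \<noteq> t0" using s w NCo_irrefl by metis
    then have "t0 < s" using s by simp
    then have gc: "g \<in> C s" using NCo_C wn w by blast
    have nN: "\<not> Nty s" using IL_iff[OF s(1)] s g by simp
    show False
    proof (cases "lay s \<in> U s")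
      case True then show False using F1[OF s(1) True] gc s by simp
    next
      case False then show False using nN gc s unfolding Nty_def by simp
    qed
  qed
  have e: "{s. s < L \<and> lay s = g} = {s. s < t0 \<and> lay s = g}" using before t0 by auto
  have len: "length (fl g t0) = cnt g" using len_fl[of t0 g] t0 e unfolding cnt_def by simp
  obtain h where h: "h \<in> verts H" "(W t0, h) \<notin> D t0" using W_prop[OF N] by blast
  have "h \<notin> (\<Union>u\<in>set (fl g t0). closed_nbhd H u)"
  proof
    assume "h \<in> (\<Union>u\<in>set (fl g t0). closed_nbhd H u)"
    then obtain s where s: "s < t0" "lay s = g" "h \<in> closed_nbhd H (hv s)" using set_fl[of t0 g] t0 by auto
    then have "(lay s, h) \<in> D t0" using ND[of s t0 h] t0 by simp
    then show False using h w s by simp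
  qed
  from legal_lt_gdn[OF finH legal_fl[of t0 g] h(1) this] t0 len show ?thesis by simp
qed

end

lemma card_less_Suc: "card {s. s < Suc t \<and> P s} = card {s. s < t \<and> P s} + (if P t then 1 else 0)"
proof -
  have "{s. s < Suc t \<and> P s} = {s. s < t \<and> P s} \<union> (if P t then {t} else {})" by (auto simp: less_Suc_eq)
  moreover have "card ({s. s < t \<and> P s} \<union> (if P t then {t} else {})) = card {s. s < t \<and> P s} + card (if P t then {t} else {})"
    by (rule card_Un_disjoint) auto
  ultimately show ?thesis by simp
qed

context UB begin

lemma finite_IL: "finite IL"
proof -
  have "IL \<subseteq> lay ` {..<L}" unfolding IL_def Ity_def by auto
  then show ?thesis using finite_surj by blast
qed

lemma Nty_lt: "Nty t \<Longrightarrow> t < L" unfolding Nty_def by simp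

lemma L_split: "L = card {t. t < L \<and> lay t \<in> IL} + card {t. Nty t}"
proof -
  have e: "{..<L} = {t. t < L \<and> lay t \<in> IL} \<union> {t. Nty t}" using IL_iff Nty_lt by auto
  have d: "{t. t < L \<and> lay t \<in> IL} \<inter> {t. Nty t} = {}" using IL_iff by auto
  have f2: "finite {t. Nty t}" using Nty_lt by (metis finite_nat_set_iff_bounded mem_Collect_eq)
  have "card {..<L} = card {t. t < L \<and> lay t \<in> IL} + card {t. Nty t}"
    unfolding e by (rule card_Un_disjoint[OF _ f2 d]) auto
  then show ?thesis by simp
qed

lemma A_sum: "card {t. t < L \<and> lay t \<in> IL} = (\<Sum>g\<in>IL. cnt g)"
proof -
  have e: "{t. t < L \<and> lay t \<in> IL} = (\<Union>g\<in>IL. {s. s < L \<and> lay s = g})" by auto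
  show ?thesis unfolding e cnt_def
    by (rule card_UN_disjoint[OF finite_IL]) auto
qed

definition MM where "MM = W ` {t. Nty t}"
definition uu where "uu = card {t. Nty t \<and> W t \<notin> IL}"

lemma uu_eq: "uu = card {s. s < L \<and> Nty s \<and> W s \<notin> IL}"
proof -
  have "{t. Nty t \<and> W t \<notin> IL} = {s. s < L \<and> Nty s \<and> W s \<notin> IL}" using Nty_lt by auto
  then show ?thesis unfolding uu_def by simp
qed

lemma inj_W: "inj_on W {t. Nty t}" using W_inj by (auto intro: inj_onI)

lemma card_Nty: "card {t. Nty t} = card (MM \<inter> IL) + uu"
proof -
  have f2: "finite {t. Nty t}" using Nty_lt by (metis finite_nat_set_iff_bounded mem_Collect_eq)
  have fM: "finite MM" unfolding MM_def using f2 by simp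
  have "card {t. Nty t} = card MM" unfolding MM_def using card_image[OF inj_W] by simp
  also have "MM = (MM \<inter> IL) \<union> (MM - IL)" by blast
  also have "card \<dots> = card (MM \<inter> IL) + card (MM - IL)" by (rule card_Un_disjoint) (use fM in auto)
  also have "MM - IL = W ` {t. Nty t \<and> W t \<notin> IL}" unfolding MM_def by auto
  also have "card \<dots> = uu" unfolding uu_def
    by (rule card_image) (rule inj_on_subset[OF inj_W], auto)
  finally show ?thesis .
qed

lemma sum_cnt: "(\<Sum>g\<in>IL. cnt g) + card (IL \<inter> MM) \<le> kk * card IL"
proof -
  have "(\<Sum>g\<in>IL. cnt g + (if g \<in> MM then 1 else 0)) \<le> (\<Sum>g\<in>IL. kk)"
  proof (rule sum_mono)
    fix g assume g: "g \<in> IL"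
    show "cnt g + (if g \<in> MM then 1 else 0) \<le> kk"
    proof (cases "g \<in> MM")
      case True
      then obtain t0 where "Nty t0" "W t0 = g" unfolding MM_def by auto
      then show ?thesis using cnt_marked[OF g] True by simp
    next
      case False then show ?thesis using cnt_le by simp
    qed
  qed
  moreover have "(\<Sum>g\<in>IL. (if g \<in> MM then 1 else 0)::nat) = card (IL \<inter> MM)"
    using sum.If_cases[OF finite_IL, of "\<lambda>g. g \<in> MM" "\<lambda>_. 1::nat" "\<lambda>_. 0"]
    by (simp add: Int_def)
  ultimately show ?thesis by (simp add: sum.distrib mult.commute)
qed

lemma ineq1: "L \<le> kk * card IL + uu"
  using L_split A_sum card_Nty sum_cnt by (simp add: Int_commute)

definition T where "T t = (\<Union>j<t. NCc n m (lay j))"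

lemma T_Suc: "T (Suc t) = T t \<union> NCc n m (lay t)"
  unfolding T_def by (auto simp: lessThan_Suc)

lemma T_eq: "t \<le> L \<Longrightarrow> T t = C t \<union> U t"
proof -
  assume t: "t \<le> L"
  have "\<And>j. j < t \<Longrightarrow> NCc n m (lay j) = insert (lay j) (NCo n m (lay j))"
    using NCc_NCo xs_in t by simp
  then show ?thesis unfolding T_def C_def U_def by auto
qed

lemma T_sub: "T t \<subseteq> {1..n}" unfolding T_def NCc_def by auto

lemma Ity_notT: "Ity t \<Longrightarrow> lay t \<notin> T t"
  using T_eq unfolding Ity_def by auto

lemma Nty_W_notT: "Nty t \<Longrightarrow> W t \<notin> IL \<Longrightarrow> W t \<notin> T t"
  using T_eq W_notC W_U Nty_lt by (metis Un_iff less_imp_le_nat)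

lemma pot1: "t \<le> L \<Longrightarrow> (m + 1) * card {s. s < t \<and> Ity s} + card {s. s < t \<and> Nty s \<and> W s \<notin> IL}
   \<le> card (KK n m (T t))"
proof (induction t)
  case 0 then show ?case by simp
next
  case (Suc t)
  then have t: "t < L" by simp
  have IH: "(m + 1) * card {s. s < t \<and> Ity s} + card {s. s < t \<and> Nty s \<and> W s \<notin> IL}
     \<le> card (KK n m (T t))" using Suc by simp
  have mn: "m < n" using nm by simp
  have lt: "lay t \<in> {1..n}" using xs_in t by simp
  have mono: "card (KK n m (T t)) \<le> card (KK n m (T (Suc t)))" unfolding T_Suc by (rule KK_mono) auto
  show ?case
  proof (cases "Ity t")
    case True
    then have nN: "\<not> Nty t" unfolding Ity_def Nty_def by auto
    have "card (KK n m (T t)) + (m + 1) \<le> card (KK n m (T (Suc t)))"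
      unfolding T_Suc using KK_I[OF mn lt Ity_notT[OF True]] .
    then show ?thesis using IH True nN unfolding card_less_Suc by simp
  next
    case nI: False
    show ?thesis
    proof (cases "Nty t \<and> W t \<notin> IL")
      case True
      have "W t \<in> NCc n m (lay t)" using W_prop[of t] True NCo_sub by blast
      then have "card (KK n m (T t)) + 1 \<le> card (KK n m (T (Suc t)))"
        unfolding T_Suc using KK_N[OF mn lt _ Nty_W_notT] True by blast
      then show ?thesis using IH True nI unfolding card_less_Suc by simp
    next
      case False
      have e1: "card {s. s < Suc t \<and> Ity s} = card {s. s < t \<and> Ity s}"
        using card_less_Suc[of t Ity] nI by simp
      have e2: "card {s. s < Suc t \<and> Nty s \<and> W s \<notin> IL} = card {s. s < t \<and> Nty s \<and> W s \<notin> IL}"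
        using card_less_Suc[of t "\<lambda>s. Nty s \<and> W s \<notin> IL"] False by simp
      show ?thesis unfolding e1 e2 using IH mono by linarith
    qed
  qed
qed

lemma pot2: "1 \<le> t \<Longrightarrow> t \<le> L \<Longrightarrow> 2 * m + 1 + card {s. s < t \<and> Nty s \<and> W s \<notin> IL} \<le> card (T t)"
proof (induction t)
  case 0 then show ?case by simp
next
  case (Suc t)
  then have t: "t < L" by simp
  have fT: "finite (T (Suc t))" using T_sub finite_subset by blast
  show ?case
  proof (cases "t = 0")
    case True
    have "T (Suc 0) = NCc n m (lay 0)" unfolding T_def by (auto simp: lessThan_Suc)
    moreover have "card (NCc n m (lay 0)) = 2 * m + 1" using card_NCc[of m n "lay 0"] nm xs_in t True by simp
    moreover have "\<not> Nty 0" unfolding Nty_def C_def by simp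
    moreover have "{s. s < 0 \<and> Nty s \<and> W s \<notin> IL} = {}" by simp
    ultimately show ?thesis using True unfolding card_less_Suc by simp
  next
    case False
    then have IH: "2 * m + 1 + card {s. s < t \<and> Nty s \<and> W s \<notin> IL} \<le> card (T t)" using Suc by simp
    have mono: "card (T t) \<le> card (T (Suc t))" using fT unfolding T_Suc by (intro card_mono) auto
    show ?thesis
    proof (cases "Nty t \<and> W t \<notin> IL")
      case True
      have w: "W t \<in> NCc n m (lay t)" using W_prop[of t] True NCo_sub by blast
      have wn: "W t \<notin> T t" using Nty_W_notT True by blast
      have "insert (W t) (T t) \<subseteq> T (Suc t)" using w unfolding T_Suc by auto
      then have "card (insert (W t) (T t)) \<le> card (T (Suc t))" using fT by (intro card_mono)
      moreover have "card (insert (W t) (T t)) = card (T t) + 1"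
        using wn finite_subset[OF T_sub] by simp
      ultimately show ?thesis using IH True unfolding card_less_Suc by simp
    next
      case False
      have e2: "card {s. s < Suc t \<and> Nty s \<and> W s \<notin> IL} = card {s. s < t \<and> Nty s \<and> W s \<notin> IL}"
        using card_less_Suc[of t "\<lambda>s. Nty s \<and> W s \<notin> IL"] False by simp
      show ?thesis unfolding e2 using IH mono by linarith
    qed
  qed
qed

lemma card_IL: "card IL = card {s. s < L \<and> Ity s}"
proof -
  have "inj_on lay {t. Ity t}"
  proof (rule inj_onI)
    fix s t assume s: "s \<in> {t. Ity t}" and t: "t \<in> {t. Ity t}" and e: "lay s = lay t"
    show "s = t"
    proof (rule ccontr)
      assume "s \<noteq> t"
      then consider "s < t" | "t < s" by linarith
      then show False
      proof cases
        case 1 then have "lay t \<in> U t" using e unfolding U_def by (metis image_eqI lessThan_iff)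
        then show False using t unfolding Ity_def by simp
      next
        case 2 then have "lay s \<in> U s" using e unfolding U_def by (metis image_eqI lessThan_iff)
        then show False using s unfolding Ity_def by simp
      qed
    qed
  qed
  moreover have "{t. Ity t} = {s. s < L \<and> Ity s}" unfolding Ity_def by auto
  ultimately show ?thesis unfolding IL_def using card_image by metis
qed

lemma L_pos: "1 \<le> L"
proof (rule ccontr)
  assume a: "\<not> 1 \<le> length xs"
  then have "xs = []" by (cases xs) auto
  then have "verts GG = {}" using gs unfolding grundy_iff by simp
  then show False using neH nm unfolding verts_lex verts_cp by auto
qed

lemma ineq2: "(m + 1) * card IL + uu \<le> n"
proof -
  have "(m + 1) * card IL + uu \<le> card (KK n m (T L))"
    using pot1[of L] card_IL unfolding uu_eq by simp
  also have "\<dots> \<le> n" by (rule KK_card_le)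
  finally show ?thesis .
qed

lemma ineq3: "2 * m + 1 + uu \<le> n"
proof -
  have "2 * m + 1 + uu \<le> card (T L)" using pot2[OF L_pos] unfolding uu_eq by simp
  also have "\<dots> \<le> n" using card_mono[OF _ T_sub, of L] by simp
  finally show ?thesis .
qed

end

lemma arith_ub:
  fixes L k i u n m :: nat
  assumes a1: "L \<le> k * i + u" and a2: "(m + 1) * i + u \<le> n" and a3: "2 * m + 1 + u \<le> n"
    and a4: "1 \<le> k" and a5: "2 * (m + 1) \<le> n"
  shows "L \<le> (if k \<ge> m + 1 then (n div (m + 1)) * (k - (m + 1)) + n else 2 * k + n - (2 * m + 2))"
proof (cases "k \<ge> m + 1")
  case True
  define q where "q = n div (m + 1)"
  have "i * (m + 1) div (m + 1) \<le> n div (m + 1)" using a2 by (intro div_le_mono) (simp add: mult.commute)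
  moreover have "i * (m + 1) div (m + 1) = i" by (rule nonzero_mult_div_cancel_right) simp
  ultimately have iq: "i \<le> q" unfolding q_def by simp
  have ki: "k * i = (m + 1) * i + (k - (m + 1)) * i"
    using True by (metis add_mult_distrib le_add_diff_inverse)
  have "(k - (m + 1)) * i \<le> (k - (m + 1)) * q" using iq by (rule mult_left_mono) simp
  then have "L \<le> n + (k - (m + 1)) * q" using a1 a2 ki by linarith
  then show ?thesis using True unfolding q_def by (simp add: mult.commute)
next
  case False
  then have kle: "k \<le> m" by simp
  define d where "d = m + 1 - k"
  have md: "m + 1 = k + d" unfolding d_def using kle by simp
  show ?thesis
  proof (cases "2 \<le> i")
    case True
    have "d * 2 \<le> d * i" using True by (rule mult_left_mono) simp
    moreover have "(m + 1) * i = k * i + d * i" unfolding md by (simp add: add_mult_distrib)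
    ultimately have "L + 2 * d \<le> n" using a1 a2 by linarith
    then show ?thesis using False md by simp
  next
    case False
    then have "k * i \<le> k" using not_le by (cases i) (auto simp: less_Suc_eq)
    then have "L + (2 * m + 2) \<le> 2 * k + n" using a1 a3 a4 by linarith
    then show ?thesis using kle by simp
  qed
qed

context UB begin

lemma kk_pos: "1 \<le> kk"
proof -
  obtain ys where ys: "grundy_dom_seq H ys" "length ys = kk" using gdn_ex[OF finH] by blast
  have "ys \<noteq> []"
  proof
    assume "ys = []"
    then show False using ys(1) neH unfolding grundy_iff by simp
  qed
  then show ?thesis using ys(2) by (cases ys) auto
qed

lemma UB_main: "L \<le> (if kk \<ge> m + 1 then (n div (m + 1)) * (kk - (m + 1)) + n else 2 * kk + n - (2 * m + 2))"
  by (rule arith_ub[OF ineq1 ineq2 ineq3 kk_pos nm])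

end

lemma cd_lt:
  assumes "b \<in> {1..n}" "x \<in> {1..n}" "b < x"
  shows "cycle_dist n b x = min (b + n - x) (x - b)" "cycle_dist n x b = min (x - b) (b + n - x)"
proof -
  have e1: "fw n x b = b + n - x" using fw_eq[of x n b] assms by simp
  have e2: "fw n b x = x - b" using fw_eq[of b n x] assms by simp
  show "cycle_dist n b x = min (b + n - x) (x - b)" unfolding cd_fw e1 e2 by simp
  show "cycle_dist n x b = min (x - b) (b + n - x)" unfolding cd_fw e1 e2 by simp
qed

lemma NCo_iff: "x \<in> NCo n m g \<longleftrightarrow> x \<in> {1..n} \<and> x \<noteq> g \<and> cycle_dist n g x \<le> m"
  unfolding NCo_def by simp

lemma legal_block:
  assumes ys: "legal (lex_product (cycle_power n m) H) ys" and hs: "legal H hs" and g: "g \<in> {1..n}"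
    and free: "\<And>u. u \<in> set ys \<Longrightarrow> fst u \<noteq> g \<and> g \<notin> NCo n m (fst u)"
  shows "legal (lex_product (cycle_power n m) H) (ys @ map (\<lambda>h. (g, h)) hs)"
  using hs
proof (induction hs rule: rev_induct)
  case Nil then show ?case using ys by simp
next
  case (snoc h hs')
  have l': "legal H hs'" and hn: "h \<notin> set hs'" and hV: "h \<in> verts H"
    and ns: "\<not> closed_nbhd H h \<subseteq> (\<Union>u\<in>set hs'. closed_nbhd H u)"
    using snoc.prems unfolding legal_snoc by blast+
  have IH: "legal (lex_product (cycle_power n m) H) (ys @ map (\<lambda>h. (g, h)) hs')" using snoc.IH l' by blast
  obtain z where z: "z \<in> closed_nbhd H h" "z \<notin> (\<Union>u\<in>set hs'. closed_nbhd H u)" using ns by blast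
  have ysV: "set ys \<subseteq> verts (lex_product (cycle_power n m) H)" using ys unfolding legal_def by blast
  have nin: "(g, h) \<notin> set (ys @ map (\<lambda>h. (g, h)) hs')" using free hn by force
  have inV: "(g, h) \<in> verts (lex_product (cycle_power n m) H)" using g hV unfolding verts_lex verts_cp by simp
  have zin: "(g, z) \<in> closed_nbhd (lex_product (cycle_power n m) H) (g, h)"
    using nbhd_G[OF g hV, of m] z by simp
  have znot: "(g, z) \<notin> (\<Union>u\<in>set (ys @ map (\<lambda>h. (g, h)) hs'). closed_nbhd (lex_product (cycle_power n m) H) u)"
  proof
    assume "(g, z) \<in> (\<Union>u\<in>set (ys @ map (\<lambda>h. (g, h)) hs'). closed_nbhd (lex_product (cycle_power n m) H) u)"
    then obtain u where u: "u \<in> set (ys @ map (\<lambda>h. (g, h)) hs')" "(g, z) \<in> closed_nbhd (lex_product (cycle_power n m) H) u"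
      by blast
    show False
    proof (cases "u \<in> set ys")
      case True
      obtain a b where ab: "u = (a, b)" by (cases u)
      have "a \<in> {1..n}" "b \<in> verts H" using ysV True ab unfolding verts_lex verts_cp by auto
      then have "closed_nbhd (lex_product (cycle_power n m) H) u = NCo n m a \<times> verts H \<union> {a} \<times> closed_nbhd H b"
        using nbhd_G ab by simp
      then show False using u(2) free[OF True] ab by auto
    next
      case False
      then obtain h' where h': "h' \<in> set hs'" "u = (g, h')" using u(1) by auto
      have "h' \<in> verts H" using l' h' unfolding legal_def by blast
      then have "closed_nbhd (lex_product (cycle_power n m) H) u = NCo n m g \<times> verts H \<union> {g} \<times> closed_nbhd H h'"
        using nbhd_G g h' by simp
      then show False using u(2) z h' NCo_irrefl[of g n m] by auto
    qed
  qed
  have "legal (lex_product (cycle_power n m) H) ((ys @ map (\<lambda>h. (g, h)) hs') @ [(g, h)])"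
    unfolding legal_snoc using IH nin inV zin znot by blast
  then show ?case by simp
qed

lemma legal_single:
  assumes ys: "legal (lex_product (cycle_power n m) H) ys" and a: "a \<in> {1..n}" and h0: "h0 \<in> verts H"
    and w: "w \<in> NCo n m a"
    and free: "\<And>u. u \<in> set ys \<Longrightarrow> fst u \<noteq> a \<and> fst u \<noteq> w \<and> w \<notin> NCo n m (fst u)"
  shows "legal (lex_product (cycle_power n m) H) (ys @ [(a, h0)])"
proof -
  have ysV: "set ys \<subseteq> verts (lex_product (cycle_power n m) H)" using ys unfolding legal_def by blast
  have nin: "(a, h0) \<notin> set ys" using free by force
  have inV: "(a, h0) \<in> verts (lex_product (cycle_power n m) H)" using a h0 unfolding verts_lex verts_cp by simp
  have win: "(w, h0) \<in> closed_nbhd (lex_product (cycle_power n m) H) (a, h0)"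
    using nbhd_G[OF a h0, of m] w h0 by simp
  have wnot: "(w, h0) \<notin> (\<Union>u\<in>set ys. closed_nbhd (lex_product (cycle_power n m) H) u)"
  proof
    assume "(w, h0) \<in> (\<Union>u\<in>set ys. closed_nbhd (lex_product (cycle_power n m) H) u)"
    then obtain u where u: "u \<in> set ys" "(w, h0) \<in> closed_nbhd (lex_product (cycle_power n m) H) u" by blast
    obtain x y where xy: "u = (x, y)" by (cases u)
    have "x \<in> {1..n}" "y \<in> verts H" using ysV u xy unfolding verts_lex verts_cp by auto
    then have "closed_nbhd (lex_product (cycle_power n m) H) u = NCo n m x \<times> verts H \<union> {x} \<times> closed_nbhd H y"
      using nbhd_G xy by simp
    then show False using u(2) free[OF u(1)] xy by auto
  qed
  show ?thesis unfolding legal_snoc using ys nin inV win wnot by blast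
qed


locale LBL =
  fixes n m :: nat and H :: "'b graph" and p :: nat and hs :: "'b list"
  assumes nm: "2 * (m + 1) \<le> n" and m0: "0 < m" and p2: "2 \<le> p" and pn: "p * (m + 1) \<le> n"
    and hsg: "grundy_dom_seq H hs" and hsne: "hs \<noteq> []"
begin

abbreviation "GG \<equiv> lex_product (cycle_power n m) H"
definition r where "r = n - p * (m + 1)"
definition h0 where "h0 = hd hs"
definition c where "c j = r + 1 + j * (m + 1)"
definition B1 where "B1 = map (\<lambda>h. (1::nat, h)) hs"
definition B2 where "B2 j = map (\<lambda>a. (a, h0)) [2..<j]"
definition blk where "blk j = map (\<lambda>h. (c j, h)) hs"
definition pre where "pre j = B1 @ B2 (r + 2) @ concat (map blk [1..<j])"

lemma hs_legal: "legal H hs" using hsg grundy_iff by blast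
lemma hs_V: "set hs \<subseteq> verts H" using hs_legal unfolding legal_def by blast
lemma h0_V: "h0 \<in> verts H" using hs_V hsne unfolding h0_def by (cases hs) auto
lemma h0_in: "h0 \<in> set hs" using hsne unfolding h0_def by (cases hs) auto

lemma r_eq: "r + p * (m + 1) = n" unfolding r_def using pn by simp
lemma r_le: "r + 2 * (m + 1) \<le> n"
proof -
  have "2 * (m + 1) \<le> p * (m + 1)" using p2 by (rule mult_right_mono) simp
  then show ?thesis using r_eq by linarith
qed

lemma c_ge: "1 \<le> j \<Longrightarrow> r + m + 2 \<le> c j"
proof -
  assume "1 \<le> j"
  then have "1 * (m + 1) \<le> j * (m + 1)" by (rule mult_right_mono) simp
  then show ?thesis unfolding c_def by simp
qed

lemma c_le: "j + 1 \<le> p \<Longrightarrow> c j + m \<le> n"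
proof -
  assume "j + 1 \<le> p"
  then have "(j + 1) * (m + 1) \<le> p * (m + 1)" by (rule mult_right_mono) simp
  then show ?thesis using r_eq unfolding c_def by (simp add: add_mult_distrib)
qed

lemma c_diff: "j' < j \<Longrightarrow> c j' + (m + 1) \<le> c j"
proof -
  assume "j' < j"
  then have "(j' + 1) * (m + 1) \<le> j * (m + 1)" by (intro mult_right_mono) simp_all
  then show ?thesis unfolding c_def by (simp add: add_mult_distrib)
qed

lemma far:
  assumes "b \<in> {1..n}" "x \<in> {1..n}" "b + (m + 1) \<le> x" "x + (m + 1) \<le> b + n"
  shows "x \<notin> NCo n m b \<and> b \<noteq> x"
proof -
  have "cycle_dist n b x = min (b + n - x) (x - b)" using cd_lt assms by simp
  moreover have "m < b + n - x" using assms by linarith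
  moreover have "m < x - b" using assms by linarith
  ultimately have "cycle_dist n b x > m" by simp
  then show ?thesis using assms unfolding NCo_iff by simp
qed

lemma near:
  assumes "b \<in> {1..n}" "x \<in> {1..n}" "b < x" "x \<le> b + m"
  shows "x \<in> NCo n m b"
proof -
  have "cycle_dist n b x = min (b + n - x) (x - b)" using cd_lt assms by simp
  then have "cycle_dist n b x \<le> m" using assms by simp
  then show ?thesis using assms unfolding NCo_iff by simp
qed

lemma fst_B1: "fst ` set B1 \<subseteq> {1}" unfolding B1_def by auto
lemma fst_B2: "fst ` set (B2 j) \<subseteq> {2..<j}" unfolding B2_def by auto

lemma legal_B1: "legal GG B1"
proof -
  have "legal GG ([] @ map (\<lambda>h. (1, h)) hs)"
    by (rule legal_block[OF legal_Nil hs_legal]) (use nm in auto)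
  then show ?thesis unfolding B1_def by simp
qed

lemma legal_B12: "2 \<le> j \<Longrightarrow> j \<le> r + 2 \<Longrightarrow> legal GG (B1 @ B2 j)"
proof (induction j rule: dec_induct)
  case base then show ?case using legal_B1 unfolding B2_def by simp
next
  case (step j)
  have e: "B2 (Suc j) = B2 j @ [(j, h0)]" unfolding B2_def using step.hyps by simp
  have IH: "legal GG (B1 @ B2 j)" using step by simp
  have jn: "j \<in> {1..n}" using step r_le by auto
  have jm: "j + m \<in> {1..n}" using step r_le by auto
  have w: "j + m \<in> NCo n m j" using near[OF jn jm] m0 by simp
  have "legal GG ((B1 @ B2 j) @ [(j, h0)])"
  proof (rule legal_single[OF IH jn h0_V w])
    fix u assume u: "u \<in> set (B1 @ B2 j)"
    then have b: "fst u \<in> {1..<j}" using fst_B1 fst_B2[of j] step.hyps by auto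
    then have bn: "fst u \<in> {1..n}" using jn by auto
    have "j + m \<notin> NCo n m (fst u) \<and> fst u \<noteq> j + m"
      using far[OF bn jm] b step r_le by auto
    then show "fst u \<noteq> j \<and> fst u \<noteq> j + m \<and> j + m \<notin> NCo n m (fst u)" using b by auto
  qed
  then show ?case using e by simp
qed

lemma fst_pre: "fst ` set (pre j) \<subseteq> {1..r + 1} \<union> c ` {1..<j}"
proof -
  have "fst ` set B1 \<subseteq> {1..r+1}" using fst_B1 by auto
  moreover have "fst ` set (B2 (r + 2)) \<subseteq> {1..r+1}" using fst_B2[of "r+2"] by auto
  moreover have "fst ` set (concat (map blk [1..<j])) \<subseteq> c ` {1..<j}"
  proof
    fix x assume "x \<in> fst ` set (concat (map blk [1..<j]))"
    then obtain v a where "v \<in> set (blk a)" "a \<in> {1..<j}" "x = fst v" by auto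
    then show "x \<in> c ` {1..<j}" unfolding blk_def by auto
  qed
  ultimately show ?thesis unfolding pre_def set_append image_Un by blast
qed

lemma legal_pre: "1 \<le> j \<Longrightarrow> j \<le> p \<Longrightarrow> legal GG (pre j)"
proof (induction j rule: dec_induct)
  case base then show ?case using legal_B12[of "r + 2"] unfolding pre_def by simp
next
  case (step j)
  have e: "pre (Suc j) = pre j @ map (\<lambda>h. (c j, h)) hs" unfolding pre_def blk_def using step.hyps by simp
  have IH: "legal GG (pre j)" using step by simp
  have cj: "c j \<in> {1..n}" using c_le[of j] step unfolding c_def by auto
  have "legal GG (pre j @ map (\<lambda>h. (c j, h)) hs)"
  proof (rule legal_block[OF IH hs_legal cj])
    fix u assume u: "u \<in> set (pre j)"
    then have "fst u \<in> {1..r + 1} \<union> c ` {1..<j}" using fst_pre by blast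
    then show "fst u \<noteq> c j \<and> c j \<notin> NCo n m (fst u)"
    proof
      assume b: "fst u \<in> {1..r + 1}"
      then have bn: "fst u \<in> {1..n}" using r_le by auto
      have "c j \<notin> NCo n m (fst u) \<and> fst u \<noteq> c j"
        using far[OF bn cj] b c_ge[of j] c_le[of j] step by auto
      then show ?thesis by simp
    next
      assume "fst u \<in> c ` {1..<j}"
      then obtain j' where j': "j' \<in> {1..<j}" "fst u = c j'" by blast
      have bn: "c j' \<in> {1..n}" using c_le[of j'] j' step unfolding c_def by auto
      have "c j \<notin> NCo n m (c j') \<and> c j' \<noteq> c j"
        using far[OF bn cj] c_diff[of j' j] c_ge[of j'] c_le[of j] j' step by auto
      then show ?thesis using j' by simp
    qed
  qed
  then show ?case using e by simp
qed

lemma length_pre: "length (pre p) = p * length hs + r"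
proof -
  have "length (concat (map blk [1..<p])) = (p - 1) * length hs"
    unfolding blk_def by (simp add: length_concat comp_def sum_list_triv)
  moreover have "length B1 = length hs" unfolding B1_def by simp
  moreover have "length (B2 (r + 2)) = r" unfolding B2_def by auto
  moreover obtain p' where pp: "p = Suc p'" using p2 by (cases p) auto
  ultimately show ?thesis unfolding pre_def by simp
qed

end

context LBL begin

lemma in_B1: "hl \<in> set hs \<Longrightarrow> (1, hl) \<in> set (pre p)" unfolding pre_def B1_def by auto
lemma in_B2: "2 \<le> a \<Longrightarrow> a \<le> r + 1 \<Longrightarrow> (a, h0) \<in> set (pre p)" unfolding pre_def B2_def by auto
lemma in_blk: "1 \<le> j \<Longrightarrow> j < p \<Longrightarrow> hl \<in> set hs \<Longrightarrow> (c j, hl) \<in> set (pre p)"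
  unfolding pre_def blk_def by auto

lemma pre_V: "set (pre p) \<subseteq> verts GG" using legal_pre[of p] p2 unfolding legal_def by auto

lemma internal:
  assumes "(g, hl) \<in> set (pre p)" "hl \<in> set hs" "h \<in> closed_nbhd H hl"
  shows "(g, h) \<in> (\<Union>u\<in>set (pre p). closed_nbhd GG u)"
proof -
  have g: "g \<in> {1..n}" using pre_V assms(1) unfolding verts_lex verts_cp by auto
  have "hl \<in> verts H" using hs_V assms(2) by auto
  then have "(g, h) \<in> closed_nbhd GG (g, hl)" using nbhd_G[OF g, of hl H m] assms(3) by simp
  then show ?thesis using assms(1) by blast
qed

lemma nbr:
  assumes "(b, y) \<in> set (pre p)" "x \<in> NCo n m b" "h \<in> verts H"
  shows "(x, h) \<in> (\<Union>u\<in>set (pre p). closed_nbhd GG u)"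
proof -
  have b: "b \<in> {1..n}" "y \<in> verts H" using pre_V assms(1) unfolding verts_lex verts_cp by auto
  then have "(x, h) \<in> closed_nbhd GG (b, y)" using nbhd_G[OF b(1) b(2), of m] assms by simp
  then show ?thesis using assms(1) by blast
qed

lemma dom_pre: "(\<Union>u\<in>set (pre p). closed_nbhd GG u) = verts GG"
proof
  show "(\<Union>u\<in>set (pre p). closed_nbhd GG u) \<subseteq> verts GG"
    using pre_V closed_nbhd_sub[of _ GG] by blast
  show "verts GG \<subseteq> (\<Union>u\<in>set (pre p). closed_nbhd GG u)"
  proof
    fix v assume v: "v \<in> verts GG"
    obtain x h where xh: "v = (x, h)" by (cases v)
    have x: "x \<in> {1..n}" and h: "h \<in> verts H" using v xh unfolding verts_lex verts_cp by auto
    have "h \<in> (\<Union>u\<in>set hs. closed_nbhd H u)" using hsg h unfolding grundy_iff by simp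
    then obtain hl where hl: "hl \<in> set hs" "h \<in> closed_nbhd H hl" by blast
    have one: "1 \<in> {1..n}" using nm by simp
    have "(x, h) \<in> (\<Union>u\<in>set (pre p). closed_nbhd GG u)"
    proof -
      have x1: "1 \<le> x" using x by simp
      consider "x = 1" | "2 \<le> x \<and> x \<le> m + 1" | "m + 2 \<le> x \<and> x \<le> r + 1 + m" | "r + m + 2 \<le> x"
        using x1 by linarith
      then show ?thesis
      proof cases
        case 1 then show ?thesis using internal[OF in_B1[OF hl(1)] hl] by simp
      next
        case 2
        have "x \<in> NCo n m 1" using near[OF one x] 2 by simp
        then show ?thesis using nbr[OF in_B1[OF h0_in] _ h] by simp
      next
        case 3
        define b where "b = x - m"
        have b: "2 \<le> b" "b \<le> r + 1" "b \<in> {1..n}" using 3 x unfolding b_def by auto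
        have "x \<in> NCo n m b" using near[OF b(3) x] m0 3 unfolding b_def by simp
        then show ?thesis using nbr[OF in_B2[OF b(1,2)] _ h] by simp
      next
        case 4
        define a where "a = x - (r + 1)"
        define j where "j = a div (m + 1)"
        define md where "md = a mod (m + 1)"
        have adec: "a = j * (m + 1) + md" unfolding j_def md_def using div_mult_mod_eq[of a "m + 1"] by simp
        have md: "md \<le> m" unfolding md_def using mod_less_divisor[of "m + 1" a] by simp
        have xc: "x = c j + md" unfolding c_def using adec 4 unfolding a_def by simp
        have j1: "1 \<le> j"
        proof (rule ccontr)
          assume "\<not> 1 \<le> j" then have "j = 0" by simp
          then show False using adec md 4 unfolding a_def by simp
        qed
        have jp: "j < p"
        proof (rule ccontr)
          assume "\<not> j < p"
          then have "p * (m + 1) \<le> j * (m + 1)" by (intro mult_right_mono) simp_all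
          then show False using xc r_eq x unfolding c_def by simp
        qed
        show ?thesis
        proof (cases "md = 0")
          case True then show ?thesis using internal[OF in_blk[OF j1 jp hl(1)] hl] xc by simp
        next
          case False
          have cj: "c j \<in> {1..n}" using xc x unfolding c_def by auto
          have "x \<in> NCo n m (c j)" using near[OF cj x] xc md False by simp
          then show ?thesis using nbr[OF in_blk[OF j1 jp h0_in] _ h] by simp
        qed
      qed
    qed
    then show "v \<in> (\<Union>u\<in>set (pre p). closed_nbhd GG u)" using xh by simp
  qed
qed

lemma LB_seq: "grundy_dom_seq GG (pre p) \<and> length (pre p) = p * length hs + (n - p * (m + 1))"
  using legal_pre[of p] p2 dom_pre length_pre unfolding grundy_iff r_def by simp

end

theorem theorem3:
  fixes n m :: nat and H :: "'b graph"
  assumes "0 < n" and "0 < m" and "2 * (m + 1) \<le> n"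
    and "finite_simple_graph H" and "verts H \<noteq> {}"
  shows "grundy_dom_number (lex_product (cycle_power n m) H) =
    (if grundy_dom_number H \<ge> m + 1
     then (n div (m + 1)) * (grundy_dom_number H - (m + 1)) + n
     else 2 * grundy_dom_number H + n - (2 * m + 2))"
proof -
  have finH: "finite (verts H)" using assms(4) unfolding finite_simple_graph_def by blast
  have finG: "finite (verts (lex_product (cycle_power n m) H))" unfolding verts_lex verts_cp using finH by simp
  obtain xs where xs: "grundy_dom_seq (lex_product (cycle_power n m) H) xs"
    "length xs = grundy_dom_number (lex_product (cycle_power n m) H)" using gdn_ex[OF finG] by blast
  interpret U: UB n m H xs using assms xs finH by unfold_locales auto
  have ub: "grundy_dom_number (lex_product (cycle_power n m) H) \<le>
    (if grundy_dom_number H \<ge> m + 1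
     then (n div (m + 1)) * (grundy_dom_number H - (m + 1)) + n
     else 2 * grundy_dom_number H + n - (2 * m + 2))" using U.UB_main xs(2) by simp
  obtain hs where hs: "grundy_dom_seq H hs" "length hs = grundy_dom_number H" using gdn_ex[OF finH] by blast
  have hsne: "hs \<noteq> []"
  proof
    assume "hs = []" then show False using hs(1) assms(5) unfolding grundy_iff by simp
  qed
  have lb: "(if grundy_dom_number H \<ge> m + 1
     then (n div (m + 1)) * (grundy_dom_number H - (m + 1)) + n
     else 2 * grundy_dom_number H + n - (2 * m + 2)) \<le> grundy_dom_number (lex_product (cycle_power n m) H)"
  proof (cases "grundy_dom_number H \<ge> m + 1")
    case True
    define p where "p = n div (m + 1)"
    have "2 * (m + 1) div (m + 1) \<le> n div (m + 1)" using assms(3) by (rule div_le_mono)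
    moreover have "2 * (m + 1) div (m + 1) = 2" by (rule nonzero_mult_div_cancel_right) simp
    ultimately have p2: "2 \<le> p" unfolding p_def by simp
    have pn: "p * (m + 1) \<le> n" unfolding p_def by (rule div_times_less_eq_dividend)
    interpret LB: LBL n m H p hs using assms p2 pn hs hsne by unfold_locales auto
    have "p * length hs + (n - p * (m + 1)) \<le> grundy_dom_number (lex_product (cycle_power n m) H)"
      using LB.LB_seq gdn_ge[OF finG] by metis
    moreover have "p * length hs + (n - p * (m + 1)) = p * (grundy_dom_number H - (m + 1)) + n"
    proof -
      have "p * length hs = p * (grundy_dom_number H - (m + 1)) + p * (m + 1)"
        using True hs(2) by (metis add_mult_distrib2 le_add_diff_inverse2)
      then show ?thesis using pn by simp
    qed
    ultimately show ?thesis using True unfolding p_def by simp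
  next
    case False
    have p2: "2 \<le> (2::nat)" by simp
    interpret LB: LBL n m H 2 hs using assms hs hsne by unfold_locales auto
    have "2 * length hs + (n - 2 * (m + 1)) \<le> grundy_dom_number (lex_product (cycle_power n m) H)"
      using LB.LB_seq gdn_ge[OF finG] by metis
    then show ?thesis using False hs(2) assms(3) by simp
  qed
  show ?thesis using ub lb by simp
qed


end
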